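(* Let $t\ge2$ and consider the complete graph $K_{t+1}$ on vertices $v_1,\dots,v_{t+1}$. Let $\widehat{K}_t$ be any $3$-coloring of the edges among $v_1,\dots,v_t$ containing no rainbow triangle. Then the number of ways to $3$-color the edges incident to $v_{t+1}$ so that the resulting coloring of $K_{t+1}$ still contains no rainbow triangle is at most $t\,2^t$.
   Context: A rainbow triangle is a triangle whose three edges have three distinct colors. Colorings need not be proper. *)

theory Defs
  imports Main "HOL-Library.FuncSet"
begin

text \<open>An edge colouring of a complete graph on vertex set V is a symmetric function
  c :: 'v => 'v => 'k restricted to pairs of distinct vertices of V.\<close>

definition sym_coloring :: "'v set \<Rightarrow> 'k set \<Rightarrow> ('v \<Rightarrow> 'v \<Rightarrow> 'k) \<Rightarrow> bool" where
  "sym_coloring V K c \<longleftrightarrow>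
     (\<forall>x\<in>V. \<forall>y\<in>V. x \<noteq> y \<longrightarrow> c x y \<in> K \<and> c x y = c y x)"

definition rainbow_triangle :: "('v \<Rightarrow> 'v \<Rightarrow> 'k) \<Rightarrow> 'v \<Rightarrow> 'v \<Rightarrow> 'v \<Rightarrow> bool" where
  "rainbow_triangle c x y z \<longleftrightarrow>
     x \<noteq> y \<and> y \<noteq> z \<and> x \<noteq> z \<and>
     c x y \<noteq> c y z \<and> c y z \<noteq> c x z \<and> c x y \<noteq> c x z"

definition rainbow_free :: "'v set \<Rightarrow> ('v \<Rightarrow> 'v \<Rightarrow> 'k) \<Rightarrow> bool" where
  "rainbow_free V c \<longleftrightarrow> (\<forall>x\<in>V. \<forall>y\<in>V. \<forall>z\<in>V. \<not> rainbow_triangle c x y z)"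

text \<open>Colouring of K_{t+1} on {0..t} obtained from a colouring c of the edges among
  {0..<t} and a colouring f of the edges {i, t} (i < t) incident to the new vertex t.\<close>

definition extend_coloring :: "nat \<Rightarrow> (nat \<Rightarrow> nat \<Rightarrow> 'k) \<Rightarrow> (nat \<Rightarrow> 'k) \<Rightarrow> nat \<Rightarrow> nat \<Rightarrow> 'k" where
  "extend_coloring t c f x y = (if x = t then f y else if y = t then f x else c x y)"

end

theory Submission
  imports Defs
begin

definition GG :: "(nat \<Rightarrow> nat \<Rightarrow> nat) \<Rightarrow> nat \<Rightarrow> (nat \<Rightarrow> nat) set" where
  "GG c n = {f \<in> {0..<n} \<rightarrow>\<^sub>E {0, 1, 2 :: nat}.
     \<forall>i<n. \<forall>j<n. i \<noteq> j \<longrightarrow> \<not> (f i \<noteq> f j \<and> c i j \<noteq> f i \<and> c i j \<noteq> f j)}"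

definition BB :: "(nat \<Rightarrow> nat \<Rightarrow> nat) \<Rightarrow> nat \<Rightarrow> (nat \<Rightarrow> nat) \<Rightarrow> nat set" where
  "BB c n g = {a \<in> {0,1,2}. \<forall>j<n. g j \<noteq> a \<longrightarrow> c n j = a \<or> c n j = g j}"

lemma finite_GG: "finite (GG c n)"
proof -
  have "GG c n \<subseteq> {0..<n} \<rightarrow>\<^sub>E {0, 1, 2 :: nat}" by (auto simp: GG_def)
  moreover have "finite ({0..<n} \<rightarrow>\<^sub>E {0, 1, 2 :: nat})" by (intro finite_PiE) auto
  ultimately show ?thesis by (rule finite_subset)
qed

lemma BB_le3: "card (BB c n g) \<le> 3"
proof -
  have "BB c n g \<subseteq> {0,1,2}" by (auto simp: BB_def)
  hence "card (BB c n g) \<le> card {0,1,2::nat}" by (intro card_mono) auto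
  thus ?thesis by simp
qed

lemma BB_le2:
  assumes "g \<in> GG c n" "g \<noteq> restrict (\<lambda>j. c n j) {0..<n}"
  shows "card (BB c n g) \<le> 2"
proof -
  from assms have gext: "g \<in> extensional {0..<n}" by (auto simp: GG_def PiE_def)
  have "\<exists>j<n. g j \<noteq> c n j"
  proof (rule ccontr)
    assume "\<not> (\<exists>j<n. g j \<noteq> c n j)"
    hence "\<forall>j<n. g j = c n j" by blast
    hence "g = restrict (\<lambda>j. c n j) {0..<n}"
      using gext by (intro ext) (auto simp: extensional_def)
    with assms(2) show False by simp
  qed
  then obtain j where j: "j < n" "g j \<noteq> c n j" by blast
  have "BB c n g \<subseteq> {g j, c n j}" using j by (auto simp: BB_def)
  hence "card (BB c n g) \<le> card {g j, c n j}" by (intro card_mono) auto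
  also have "\<dots> \<le> 2" by (simp add: card_insert_le_m1)
  finally show ?thesis .
qed

lemma GG_step: "card (GG c (Suc n)) \<le> 2 * card (GG c n) + 1"
proof -
  let ?g0 = "restrict (\<lambda>j. c n j) {0..<n}"
  have sub: "GG c (Suc n) \<subseteq> (\<lambda>(g,a). g(n:=a)) ` (SIGMA g:GG c n. BB c n g)"
  proof
    fix f assume f: "f \<in> GG c (Suc n)"
    let ?g = "f(n:=undefined)"
    have fP: "f \<in> {0..<Suc n} \<rightarrow>\<^sub>E {0, 1, 2 :: nat}" using f by (simp add: GG_def)
    have fC: "\<And>i j. i < Suc n \<Longrightarrow> j < Suc n \<Longrightarrow> i \<noteq> j \<Longrightarrow>
        \<not> (f i \<noteq> f j \<and> c i j \<noteq> f i \<and> c i j \<noteq> f j)"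
      using f unfolding GG_def by blast
    have gP: "?g \<in> {0..<n} \<rightarrow>\<^sub>E {0, 1, 2 :: nat}"
    proof (rule PiE_I)
      fix x assume "x \<in> {0..<n}"
      thus "?g x \<in> {0,1,2}" using fP by (auto simp: PiE_iff)
    next
      fix x assume "x \<notin> {0..<n}"
      thus "?g x = undefined" using fP by (cases "x = n") (auto simp: PiE_iff extensional_def)
    qed
    have "?g \<in> GG c n" unfolding GG_def
    proof (intro CollectI conjI allI impI gP)
      fix i j assume "i < n" "j < n" "i \<noteq> j"
      thus "\<not> (?g i \<noteq> ?g j \<and> c i j \<noteq> ?g i \<and> c i j \<noteq> ?g j)"
        using fC[of i j] by simp
    qed
    moreover have "f n \<in> BB c n ?g"
    proof -
      have "f n \<in> {0,1,2}" using fP by (auto simp: PiE_iff)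
      moreover have "\<forall>j<n. f j \<noteq> f n \<longrightarrow> c n j = f n \<or> c n j = f j"
      proof (intro allI impI)
        fix j assume "j < n" "f j \<noteq> f n"
        thus "c n j = f n \<or> c n j = f j" using fC[of n j] by auto
      qed
      ultimately show ?thesis by (simp add: BB_def)
    qed
    moreover have "f = ?g(n := f n)" by simp
    ultimately show "f \<in> (\<lambda>(g,a). g(n:=a)) ` (SIGMA g:GG c n. BB c n g)"
      by (intro image_eqI[where x="(?g, f n)"]) auto
  qed
  have finB: "\<And>g. finite (BB c n g)" by (simp add: BB_def)
  have "card (GG c (Suc n)) \<le> card ((\<lambda>(g,a). g(n:=a)) ` (SIGMA g:GG c n. BB c n g))"
    using sub finB finite_GG by (intro card_mono) auto
  also have "\<dots> \<le> card (SIGMA g:GG c n. BB c n g)" by (rule card_image_le) (use finB finite_GG in auto)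
  also have "\<dots> = (\<Sum>g\<in>GG c n. card (BB c n g))" by (rule card_SigmaI) (use finB finite_GG in auto)
  also have "\<dots> \<le> (\<Sum>g\<in>GG c n. 2 + (if g = ?g0 then 1 else 0))"
  proof (rule sum_mono)
    fix g assume "g \<in> GG c n"
    thus "card (BB c n g) \<le> 2 + (if g = ?g0 then 1 else 0)"
      using BB_le2[of g c n] BB_le3[of c n g] by auto
  qed
  also have "\<dots> = 2 * card (GG c n) + (\<Sum>g\<in>GG c n. (if g = ?g0 then 1 else 0))"
    by (subst sum.distrib) simp
  also have "(\<Sum>g\<in>GG c n. (if g = ?g0 then 1 else 0::nat)) \<le> 1"
    using finite_GG by (simp add: sum.If_cases)
  finally show ?thesis by simp
qed

lemma GG_bound: "card (GG c n) + 1 \<le> 2 ^ (n+1)"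
proof (induction n)
  case 0
  have "GG c 0 \<subseteq> {\<lambda>_. undefined}" by (auto simp: GG_def PiE_def extensional_def)
  hence "card (GG c 0) \<le> card {\<lambda>_::nat. undefined::nat}" by (intro card_mono) auto
  thus ?case by simp
next
  case (Suc n)
  thus ?case using GG_step[of c n] by simp
qed

theorem lemma4p7:
  fixes t :: nat and c :: "nat \<Rightarrow> nat \<Rightarrow> nat"
  assumes "t \<ge> 2"
    and "sym_coloring {0..<t} {0, 1, 2} c"
    and "rainbow_free {0..<t} c"
  shows "card {f \<in> {0..<t} \<rightarrow>\<^sub>E {0, 1, 2 :: nat}.
                rainbow_free {0..t} (extend_coloring t c f)} \<le> t * 2 ^ t"
proof -
  have sub: "{f \<in> {0..<t} \<rightarrow>\<^sub>E {0, 1, 2 :: nat}.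
                rainbow_free {0..t} (extend_coloring t c f)} \<subseteq> GG c t"
  proof
    fix f assume f: "f \<in> {f \<in> {0..<t} \<rightarrow>\<^sub>E {0, 1, 2 :: nat}.
                rainbow_free {0..t} (extend_coloring t c f)}"
    have "\<forall>i<t. \<forall>j<t. i \<noteq> j \<longrightarrow> \<not> (f i \<noteq> f j \<and> c i j \<noteq> f i \<and> c i j \<noteq> f j)"
    proof (intro allI impI)
      fix i j assume ij: "i < t" "j < t" "i \<noteq> j"
      from f have "\<not> rainbow_triangle (extend_coloring t c f) i j t"
        using ij unfolding rainbow_free_def by auto
      thus "\<not> (f i \<noteq> f j \<and> c i j \<noteq> f i \<and> c i j \<noteq> f j)"
        using ij by (auto simp: rainbow_triangle_def extend_coloring_def)
    qed
    thus "f \<in> GG c t" using f by (auto simp: GG_def)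
  qed
  have "card {f \<in> {0..<t} \<rightarrow>\<^sub>E {0, 1, 2 :: nat}.
                rainbow_free {0..t} (extend_coloring t c f)} \<le> card (GG c t)"
    using sub finite_GG by (rule card_mono[rotated])
  also have "\<dots> \<le> 2 * 2 ^ t" using GG_bound[of c t] by simp
  also have "\<dots> \<le> t * 2 ^ t" using assms(1) by simp
  finally show ?thesis .
qed

end
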